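(* Let $(X,\mathcal A,\mu,\mu^{\otimes2},R,I,\Pi_R,G,E_0,\eta)$ be a pre-structural datum satisfying Axioms I and II, with $\mu(X)\le M<\infty$, and let $\eta\in[0,1)$. Let $\mathcal B$ be the Banach space of bounded finitely additive real-valued set functions $f:\mathcal A\to\mathbb R$ with norm $\|f\|_\infty=\sup_{B\in\mathcal A}|f(B)|$, and define $T_\eta:\mathcal B\to\mathcal B$ by $(T_\eta f)(B)=\mu(B)+\eta\,f(\Pi_R^{-1}(B))$ for $B\in\mathcal A$. Then the equation $f=T_\eta f$ has a unique solution $f_*\in\mathcal B$, given by \[f_*(B)=\mu(B)+\frac{\eta}{1-\eta}\,\mu(\Pi_R^{-1}(B))\qquad(B\in\mathcal A).\] Moreover $f_*\ge 0$ on $\mathcal A$, and for every $f_0\in\mathcal B$ the iterates $f_n:=T_\eta^n f_0$ satisfy $\|f_n-f_*\|_\infty\le\eta^n\|f_0-f_*\|_\infty$, so $f_n\to f_*$ in norm.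
   Context: For a nonempty set $X$, an algebra $\mathcal A\subseteq\mathcal P(X)$ contains $\varnothing,X$ and is closed under finite unions and complements. A finitely additive measure $\mu:\mathcal A\to[0,\infty)$ satisfies $\mu(\varnothing)=0$ and $\mu(B_1\sqcup B_2)=\mu(B_1)+\mu(B_2)$ for disjoint $B_1,B_2\in\mathcal A$. $\mathcal A\otimes\mathcal A$ denotes the algebra generated by rectangles $B_1\times B_2$, $B_i\in\mathcal A$. For relations $H,K\subseteq X\times X$, $H\circ K=\{(x,z):\exists y\,(x,y)\in H,(y,z)\in K\}$. A pre-structural datum is a tuple $(X,\mathcal A,\mu,\mu^{\otimes2},R,I,\Pi_R,G,E_0,\eta)$ where: $X$ nonempty; $\mathcal A$ an algebra on $X$; $\mu$ a finitely additive measure on $\mathcal A$; $\mu^{\otimes2}:\mathcal A\otimes\mathcal A\to[0,\infty)$ finitely additive with $\mu^{\otimes2}(B_1\times B_2)=\mu(B_1)\mu(B_2)$; $R,I\in\mathcal A$ disjoint; $\Pi_R:X\to R$ a map; $G\in\mathcal A\otimes\mathcal A$; $E_0\in(0,\infty)$; $\eta\in[0,1]$. Axiom I: $\Pi_R\circ\Pi_R=\Pi_R$, $\Pi_R(r)=r$ for all $r\in R$, and $\Pi_R^{-1}(B)\in\mathcal A$ for every $B\in\mathcal A$ with $B\subseteq R$ (hence $\Pi_R^{-1}(B)=\Pi_R^{-1}(B\cap R)\in\mathcal A$ for all $B\in\mathcal A$). Axiom II: $G$ is reflexive, symmetric, and $G\circ G=G$. *)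

theory Defs
  imports "HOL-Analysis.Analysis"
begin

definition preim :: "'a set \<Rightarrow> ('a \<Rightarrow> 'a) \<Rightarrow> 'a set \<Rightarrow> 'a set" where
  "preim X P B = {x \<in> X. P x \<in> B}"

definition prod_alg :: "'a set \<Rightarrow> 'a set set \<Rightarrow> ('a \<times> 'a) set set" where
  "prod_alg X A = \<Inter>{M. algebra (X \<times> X) M \<and> {B1 \<times> B2 | B1 B2. B1 \<in> A \<and> B2 \<in> A} \<subseteq> M}"

definition fa_measure :: "'b set set \<Rightarrow> ('b set \<Rightarrow> real) \<Rightarrow> bool" where
  "fa_measure M m \<longleftrightarrow> m {} = 0 \<and> (\<forall>B\<in>M. 0 \<le> m B) \<and> additive M m"

definition pre_structural_datum ::
  "'a set \<Rightarrow> 'a set set \<Rightarrow> ('a set \<Rightarrow> real) \<Rightarrow> (('a \<times> 'a) set \<Rightarrow> real)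
   \<Rightarrow> 'a set \<Rightarrow> 'a set \<Rightarrow> ('a \<Rightarrow> 'a) \<Rightarrow> ('a \<times> 'a) set \<Rightarrow> real \<Rightarrow> real \<Rightarrow> bool" where
  "pre_structural_datum X A \<mu> \<mu>2 R I P G E0 \<eta> \<longleftrightarrow>
     X \<noteq> {} \<and> algebra X A \<and> fa_measure A \<mu> \<and> fa_measure (prod_alg X A) \<mu>2 \<and>
     (\<forall>B1\<in>A. \<forall>B2\<in>A. \<mu>2 (B1 \<times> B2) = \<mu> B1 * \<mu> B2) \<and>
     R \<in> A \<and> I \<in> A \<and> R \<inter> I = {} \<and> (\<forall>x\<in>X. P x \<in> R) \<and>
     G \<in> prod_alg X A \<and> 0 < E0 \<and> 0 \<le> \<eta> \<and> \<eta> \<le> 1"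

definition axiom_I :: "'a set \<Rightarrow> 'a set set \<Rightarrow> 'a set \<Rightarrow> ('a \<Rightarrow> 'a) \<Rightarrow> bool" where
  "axiom_I X A R P \<longleftrightarrow> (\<forall>x\<in>X. P (P x) = P x) \<and> (\<forall>r\<in>R. P r = r) \<and>
     (\<forall>B\<in>A. B \<subseteq> R \<longrightarrow> preim X P B \<in> A)"

definition axiom_II :: "'a set \<Rightarrow> ('a \<times> 'a) set \<Rightarrow> bool" where
  "axiom_II X G \<longleftrightarrow> refl_on X G \<and> sym G \<and> G O G = G"

(* The space \<B> of bounded finitely additive real set functions on A
   (represented as functions on all sets; only values on A matter) *)
definition bfa :: "'a set set \<Rightarrow> ('a set \<Rightarrow> real) set" where
  "bfa A = {f. additive A f \<and> (\<exists>C. \<forall>B\<in>A. \<bar>f B\<bar> \<le> C)}"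

definition sup_norm :: "'a set set \<Rightarrow> ('a set \<Rightarrow> real) \<Rightarrow> real" where
  "sup_norm A f = (SUP B\<in>A. \<bar>f B\<bar>)"

definition T_op :: "'a set \<Rightarrow> ('a set \<Rightarrow> real) \<Rightarrow> ('a \<Rightarrow> 'a) \<Rightarrow> real
    \<Rightarrow> ('a set \<Rightarrow> real) \<Rightarrow> ('a set \<Rightarrow> real)" where
  "T_op X \<mu> P \<eta> f = (\<lambda>B. \<mu> B + \<eta> * f (preim X P B))"

end

theory Submission
  imports Defs
begin

lemma sn_upper:
  assumes "A \<noteq> {}" "\<forall>B\<in>A. \<bar>h B\<bar> \<le> (C::real)" "B \<in> A"
  shows "\<bar>h B\<bar> \<le> sup_norm A h"
  unfolding sup_norm_def
  by (rule cSUP_upper[OF assms(3)], rule bdd_aboveI2[of _ _ C], use assms in auto)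

lemma sn_least:
  assumes "A \<noteq> {}" "\<forall>B\<in>A. \<bar>h B\<bar> \<le> (C::real)"
  shows "sup_norm A h \<le> C"
  unfolding sup_norm_def using assms by (intro cSUP_least) auto

lemma sn_nonneg:
  assumes "A \<noteq> {}" "\<forall>B\<in>A. \<bar>h B\<bar> \<le> (C::real)"
  shows "0 \<le> sup_norm A h"
proof -
  obtain B where "B \<in> A" using assms(1) by auto
  then have "\<bar>h B\<bar> \<le> sup_norm A h" using sn_upper[OF assms] by blast
  then show ?thesis by linarith
qed

theorem theorem4p8:
  fixes X :: "'a set" and A :: "'a set set" and \<mu> :: "'a set \<Rightarrow> real"
    and \<mu>2 :: "('a \<times> 'a) set \<Rightarrow> real" and R I :: "'a set" and P :: "'a \<Rightarrow> 'a"
    and G :: "('a \<times> 'a) set" and E0 \<eta> M :: real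
  assumes datum: "pre_structural_datum X A \<mu> \<mu>2 R I P G E0 \<eta>"
    and axI: "axiom_I X A R P"
    and axII: "axiom_II X G"
    and bound: "\<mu> X \<le> M"
    and eta: "0 \<le> \<eta>" "\<eta> < 1"
  defines "fstar \<equiv> (\<lambda>B. \<mu> B + \<eta> / (1 - \<eta>) * \<mu> (preim X P B))"
  shows "(\<forall>f\<in>bfa A. T_op X \<mu> P \<eta> f \<in> bfa A)
    \<and> fstar \<in> bfa A
    \<and> (\<forall>B\<in>A. fstar B = T_op X \<mu> P \<eta> fstar B)
    \<and> (\<forall>f\<in>bfa A. (\<forall>B\<in>A. f B = T_op X \<mu> P \<eta> f B) \<longrightarrow> (\<forall>B\<in>A. f B = fstar B))
    \<and> (\<forall>B\<in>A. 0 \<le> fstar B)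
    \<and> (\<forall>f0\<in>bfa A. \<forall>n. sup_norm A (\<lambda>B. (T_op X \<mu> P \<eta> ^^ n) f0 B - fstar B)
                          \<le> \<eta> ^ n * sup_norm A (\<lambda>B. f0 B - fstar B))
    \<and> (\<forall>f0\<in>bfa A. (\<lambda>n. sup_norm A (\<lambda>B. (T_op X \<mu> P \<eta> ^^ n) f0 B - fstar B)) \<longlonglongrightarrow> 0)"
proof -
  let ?T = "T_op X \<mu> P \<eta>"
  have alg: "algebra X A" and fam: "fa_measure A \<mu>" and RA: "R \<in> A"
    and PR: "\<forall>x\<in>X. P x \<in> R" using datum unfolding pre_structural_datum_def by auto
  interpret alg: algebra X A by (rule alg)
  have PP: "\<forall>x\<in>X. P (P x) = P x" using axI unfolding axiom_I_def by auto
  have pAR: "\<And>B. B \<in> A \<Longrightarrow> B \<subseteq> R \<Longrightarrow> preim X P B \<in> A" using axI unfolding axiom_I_def by auto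
  have RX: "R \<subseteq> X" using alg.sets_into_space[OF RA] .
  have Ane: "A \<noteq> {}" using alg.top by auto
  have pA: "preim X P B \<in> A" if "B \<in> A" for B
  proof -
    have "preim X P B = preim X P (B \<inter> R)" using PR unfolding preim_def by auto
    moreover have "B \<inter> R \<in> A" using alg.Int[OF that RA] .
    ultimately show ?thesis using pAR by auto
  qed
  have pp: "preim X P (preim X P B) = preim X P B" for B
    using PR PP RX unfolding preim_def by auto
  have pUn: "preim X P (B1 \<union> B2) = preim X P B1 \<union> preim X P B2" for B1 B2
    unfolding preim_def by auto
  have pInt: "B1 \<inter> B2 = {} \<Longrightarrow> preim X P B1 \<inter> preim X P B2 = {}" for B1 B2
    unfolding preim_def by auto
  have muadd: "additive A \<mu>" and mu0: "\<forall>B\<in>A. 0 \<le> \<mu> B" using fam unfolding fa_measure_def by auto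
  have mule: "\<mu> B \<le> \<mu> X" if "B \<in> A" for B
  proof -
    have XB: "X - B \<in> A" using alg.compl_sets[OF that] .
    have "X = B \<union> (X - B)" using alg.sets_into_space[OF that] by auto
    then have "\<mu> X = \<mu> B + \<mu> (X - B)" using muadd that XB unfolding additive_def by (metis Diff_disjoint)
    then show ?thesis using mu0 XB by auto
  qed
  have mubd: "\<bar>\<mu> B\<bar> \<le> \<mu> X" if "B \<in> A" for B using mule[OF that] mu0 that by auto
  have padd: "additive A (\<lambda>B. g (preim X P B))" if "additive A g" for g
    unfolding additive_def
  proof (intro ballI impI)
    fix x y assume "x \<in> A" "y \<in> A" "x \<inter> y = {}"
    then show "g (preim X P (x \<union> y)) = g (preim X P x) + g (preim X P y)"
      using that pA pInt[of x y] unfolding pUn additive_def by blast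
  qed
  have Tin: "?T f \<in> bfa A" if "f \<in> bfa A" for f
  proof -
    have fa: "additive A f" and ex: "\<exists>C. \<forall>B\<in>A. \<bar>f B\<bar> \<le> C" using that unfolding bfa_def by auto
    from ex obtain C where C: "\<forall>B\<in>A. \<bar>f B\<bar> \<le> C" by auto
    have "additive A (?T f)" using muadd padd[OF fa] unfolding additive_def T_op_def
      by (simp add: algebra_simps)
    moreover have "\<forall>B\<in>A. \<bar>?T f B\<bar> \<le> \<mu> X + \<eta> * C"
    proof
      fix B assume B: "B \<in> A"
      have "\<bar>?T f B\<bar> \<le> \<bar>\<mu> B\<bar> + \<eta> * \<bar>f (preim X P B)\<bar>"
        unfolding T_op_def using eta abs_triangle_ineq[of "\<mu> B" "\<eta> * f (preim X P B)"] by (simp add: abs_mult)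
      also have "\<dots> \<le> \<mu> X + \<eta> * C" using mubd[OF B] C pA[OF B] eta
        by (intro add_mono mult_left_mono) auto
      finally show "\<bar>?T f B\<bar> \<le> \<mu> X + \<eta> * C" .
    qed
    ultimately show ?thesis unfolding bfa_def by blast
  qed
  have c0: "0 \<le> \<eta> / (1 - \<eta>)" using eta by auto
  have fsbd: "\<forall>B\<in>A. \<bar>fstar B\<bar> \<le> \<mu> X + \<eta> / (1 - \<eta>) * \<mu> X"
  proof
    fix B assume B: "B \<in> A"
    have "\<bar>fstar B\<bar> \<le> \<bar>\<mu> B\<bar> + \<eta> / (1 - \<eta>) * \<bar>\<mu> (preim X P B)\<bar>"
      unfolding fstar_def using c0 eta abs_triangle_ineq[of "\<mu> B" "\<eta> / (1 - \<eta>) * \<mu> (preim X P B)"] by (simp add: abs_mult)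
    also have "\<dots> \<le> \<mu> X + \<eta> / (1 - \<eta>) * \<mu> X" using mubd[OF B] mubd[OF pA[OF B]] c0
      by (intro add_mono mult_left_mono) auto
    finally show "\<bar>fstar B\<bar> \<le> \<mu> X + \<eta> / (1 - \<eta>) * \<mu> X" .
  qed
  have fsin: "fstar \<in> bfa A"
  proof -
    have "additive A fstar" using muadd padd[OF muadd] unfolding additive_def fstar_def
      by (simp add: algebra_simps)
    then show ?thesis using fsbd unfolding bfa_def by blast
  qed
  have fsfix: "\<forall>B\<in>A. fstar B = ?T fstar B"
  proof
    fix B assume "B \<in> A"
    have "\<eta> * (1 + \<eta> / (1 - \<eta>)) = \<eta> / (1 - \<eta>)" using eta by (simp add: field_simps)
    have ne: "1 - \<eta> \<noteq> 0" using eta by auto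
    show "fstar B = ?T fstar B" unfolding T_op_def fstar_def pp
      using ne by (simp add: field_simps)
  qed
  have fsnn: "\<forall>B\<in>A. 0 \<le> fstar B"
    using mu0 pA c0 unfolding fstar_def by (meson add_nonneg_nonneg mult_nonneg_nonneg)
  have diffbd: "\<exists>C. \<forall>B\<in>A. \<bar>f B - fstar B\<bar> \<le> C" if fB: "f \<in> bfa A" for f
  proof -
    obtain C where C: "\<forall>B\<in>A. \<bar>f B\<bar> \<le> C" using fB unfolding bfa_def by auto
    have "\<forall>B\<in>A. \<bar>f B - fstar B\<bar> \<le> C + (\<mu> X + \<eta> / (1 - \<eta>) * \<mu> X)"
      using C fsbd by (smt (verit))
    then show ?thesis by blast
  qed
  have Tdiff: "?T f B - fstar B = \<eta> * (f (preim X P B) - fstar (preim X P B))" if B: "B \<in> A" for f B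
  proof -
    have "fstar B = ?T fstar B" using fsfix B by blast
    then show ?thesis unfolding T_op_def by (simp add: algebra_simps)
  qed
  have step: "sup_norm A (\<lambda>B. ?T f B - fstar B) \<le> \<eta> * sup_norm A (\<lambda>B. f B - fstar B)"
    if fB: "f \<in> bfa A" for f
  proof -
    obtain C where C: "\<forall>B\<in>A. \<bar>f B - fstar B\<bar> \<le> C" using diffbd[OF fB] by auto
    show ?thesis
    proof (rule sn_least[OF Ane], rule ballI)
      fix B assume B: "B \<in> A"
      have "\<bar>?T f B - fstar B\<bar> = \<eta> * \<bar>f (preim X P B) - fstar (preim X P B)\<bar>"
        using Tdiff[OF B] eta by (simp add: abs_mult)
      also have "\<dots> \<le> \<eta> * sup_norm A (\<lambda>B. f B - fstar B)"
        using sn_upper[OF Ane C pA[OF B]] eta by (intro mult_left_mono) auto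
      finally show "\<bar>?T f B - fstar B\<bar> \<le> \<eta> * sup_norm A (\<lambda>B. f B - fstar B)" .
    qed
  qed
  have iterin: "(?T ^^ n) f0 \<in> bfa A" if "f0 \<in> bfa A" for f0 n
    by (induction n) (auto simp: that Tin)
  have contr: "sup_norm A (\<lambda>B. (?T ^^ n) f0 B - fstar B) \<le> \<eta> ^ n * sup_norm A (\<lambda>B. f0 B - fstar B)"
    if f0: "f0 \<in> bfa A" for f0 n
  proof (induction n)
    case 0 then show ?case by simp
  next
    case (Suc n)
    have "sup_norm A (\<lambda>B. (?T ^^ Suc n) f0 B - fstar B) \<le> \<eta> * sup_norm A (\<lambda>B. (?T ^^ n) f0 B - fstar B)"
      using step[OF iterin[OF f0, of n]] by simp
    also have "\<dots> \<le> \<eta> * (\<eta> ^ n * sup_norm A (\<lambda>B. f0 B - fstar B))"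
      using Suc eta by (intro mult_left_mono) auto
    finally show ?case by simp
  qed
  have uniq: "\<forall>B\<in>A. f B = fstar B" if f: "f \<in> bfa A" and fx: "\<forall>B\<in>A. f B = ?T f B" for f
  proof -
    obtain C where C: "\<forall>B\<in>A. \<bar>f B - fstar B\<bar> \<le> C" using diffbd[OF f] by auto
    have eq: "sup_norm A (\<lambda>B. ?T f B - fstar B) = sup_norm A (\<lambda>B. f B - fstar B)"
      unfolding sup_norm_def using fx by (intro SUP_cong) auto
    have "sup_norm A (\<lambda>B. f B - fstar B) \<le> \<eta> * sup_norm A (\<lambda>B. f B - fstar B)"
      using step[OF f] eq by simp
    moreover have "0 \<le> sup_norm A (\<lambda>B. f B - fstar B)" using sn_nonneg[OF Ane C] .
    ultimately have "(1 - \<eta>) * sup_norm A (\<lambda>B. f B - fstar B) \<le> 0"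
      by (simp add: algebra_simps)
    then have s0: "sup_norm A (\<lambda>B. f B - fstar B) \<le> 0" using eta by (simp add: mult_le_0_iff)
    show ?thesis
    proof
      fix B assume "B \<in> A"
      then have "\<bar>f B - fstar B\<bar> \<le> 0" using sn_upper[OF Ane C] s0 by (meson order_trans)
      then show "f B = fstar B" by simp
    qed
  qed
  have conv: "(\<lambda>n. sup_norm A (\<lambda>B. (?T ^^ n) f0 B - fstar B)) \<longlonglongrightarrow> 0" if f0: "f0 \<in> bfa A" for f0
  proof (rule real_tendsto_sandwich[of "\<lambda>n. 0" _ _ "\<lambda>n. \<eta> ^ n * sup_norm A (\<lambda>B. f0 B - fstar B)"])
    show "\<forall>\<^sub>F n in sequentially. 0 \<le> sup_norm A (\<lambda>B. (?T ^^ n) f0 B - fstar B)"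
    proof (rule always_eventually, rule allI)
      fix n
      obtain C where C: "\<forall>B\<in>A. \<bar>(?T ^^ n) f0 B - fstar B\<bar> \<le> C" using diffbd[OF iterin[OF f0]] by blast
      show "0 \<le> sup_norm A (\<lambda>B. (?T ^^ n) f0 B - fstar B)" by (rule sn_nonneg[OF Ane C])
    qed
    show "\<forall>\<^sub>F n in sequentially. sup_norm A (\<lambda>B. (?T ^^ n) f0 B - fstar B) \<le> \<eta> ^ n * sup_norm A (\<lambda>B. f0 B - fstar B)"
      using contr[OF f0] by simp
    show "(\<lambda>n. 0) \<longlonglongrightarrow> (0::real)" by simp
    show "(\<lambda>n. \<eta> ^ n * sup_norm A (\<lambda>B. f0 B - fstar B)) \<longlonglongrightarrow> 0"
      using eta by (intro tendsto_mult_left_zero LIMSEQ_power_zero) auto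
  qed
  show ?thesis using Tin fsin fsfix uniq fsnn contr conv by blast
qed

end
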